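(* Let $G=(Q,A,\delta)$ be an MDP, $q\in Q$, reals $a<0<b$ and $a\le\eta\le0$, and let $v$ be an $[a,b]$-valuation that is $\eta$-bounded with respect to some $\mathrm{NZ}\subseteq Q\times A$. For $n\in\mathbb N$ and $M\ge0$ define $f^{n,M}_v$ on infinite runs by $f^{n,M}_v(\rho)=s^n_v(\rho)$ if $c^n_v(\rho)=n$ and $f^{n,M}_v(\rho)=-M$ otherwise. Then for all $s>0$, $n\in\mathbb N$, $M\ge0$ and every strategy $\sigma$, $$\mathbb E^\sigma_q\big[G,\exp(s(f^{n,M}_v-n\eta))\big]\le\exp\Big(n\frac{s^2(b-a)^2}{8}\Big)+n\exp\Big(s(-M+n\max(|a|,|b|))+n\frac{s^2(b-a)^2}{8}\Big).$$
   Context: An MDP $G=(Q,A,\delta)$ has finite non-empty $Q,A$ and $\delta:Q\times A\to\mathcal D(Q)$; strategies are maps $\sigma:Q\cdot(A\cdot Q)^*\to\mathcal D(A)$, and $\mathbb P^\sigma_q[G,\cdot]$ (with expectation $\mathbb E^\sigma_q[G,\cdot]$) is the induced probability measure on infinite runs $(Q\cdot A)^\omega$ from $q$. An $[a,b]$-valuation is a function $v:Q\cdot(A\cdot Q)^*\to[a,b]$. It is $\eta$-bounded w.r.t. $\mathrm{NZ}\subseteq Q\times A$ if for every finite run $\rho$ with last state $\mathrm{last}(\rho)$ and every action $\alpha$: if $(\mathrm{last}(\rho),\alpha)\notin\mathrm{NZ}$ then $v(\rho\cdot(\alpha,q'))=0$ for all $q'\in Q$; if $(\mathrm{last}(\rho),\alpha)\in\mathrm{NZ}$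 then $\sum_{q'}\delta(\mathrm{last}(\rho),\alpha)(q')\,v(\rho\cdot(\alpha,q'))\le\eta$. For an infinite run $\rho=(q_0,a_0)(q_1,a_1)\cdots$, let $\mathrm{IndNZ}(\rho)=\{i:(q_i,a_i)\in\mathrm{NZ}\}$ and $\mathrm{IndNZ}^n(\rho)$ its $\min(n,|\mathrm{IndNZ}(\rho)|)$ smallest elements; $s^n_v(\rho):=\sum_{i\in\mathrm{IndNZ}^n(\rho)}v(q_0(a_0,q_1)\cdots(a_i,q_{i+1}))$ and $c^n_v(\rho):=|\mathrm{IndNZ}^n(\rho)|$. *)

theory Defs
  imports "HOL-Probability.Probability"
begin

text \<open>MDP G = (Q, A, delta): Q = UNIV of a finite type 'q, A = UNIV of a finite type 'a
 (nonempty automatically), delta :: 'q => 'a => 'q pmf.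
 Finite runs Q (A Q)^* are pairs (q0, [(a0,q1),...,(a_{k-1},q_k)]).
 Infinite runs (Q A)^omega are streams of (state, action) pairs.\<close>

type_synonym ('q,'a) fin_run = "'q \<times> ('a \<times> 'q) list"

definition last_state :: "('q,'a) fin_run \<Rightarrow> 'q" where
  "last_state h = (if snd h = [] then fst h else snd (last (snd h)))"

text \<open>History (finite run) just before choosing action number j, read off a list of
 (state, action) pairs xs: q0 (a0,q1) ... (a_{j-1},q_j).\<close>
definition hist_of :: "('q \<times> 'a) list \<Rightarrow> nat \<Rightarrow> ('q,'a) fin_run" where
  "hist_of xs j = (fst (xs ! 0), map (\<lambda>i. (snd (xs ! i), fst (xs ! Suc i))) [0..<j])"

text \<open>Probability, under strategy sigma from initial state q, that an infinite run starts
 with the finite sequence xs = (q0,a0)...(q_{k-1},a_{k-1}) of state/action pairs.\<close>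
definition prefix_prob ::
  "('q \<Rightarrow> 'a \<Rightarrow> 'q pmf) \<Rightarrow> (('q,'a) fin_run \<Rightarrow> 'a pmf) \<Rightarrow> 'q \<Rightarrow> ('q \<times> 'a) list \<Rightarrow> real" where
  "prefix_prob \<delta> \<sigma> q xs =
     (if xs = [] then 1 else
       (if fst (xs ! 0) = q then 1 else 0)
       * (\<Prod>j<length xs. pmf (\<sigma> (hist_of xs j)) (snd (xs ! j)))
       * (\<Prod>j<length xs - 1. pmf (\<delta> (fst (xs ! j)) (snd (xs ! j))) (fst (xs ! Suc j))))"

text \<open>P is the probability measure P^sigma_q[G, .] on infinite runs: a probability measure on
 the product sigma-algebra of streams whose values on all cylinder sets are those prescribed
 by the strategy and the transition function (this determines it uniquely).\<close>
definition induced_measure ::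
  "('q \<Rightarrow> 'a \<Rightarrow> 'q pmf) \<Rightarrow> (('q,'a) fin_run \<Rightarrow> 'a pmf) \<Rightarrow> 'q \<Rightarrow> ('q \<times> 'a) stream measure \<Rightarrow> bool" where
  "induced_measure \<delta> \<sigma> q P \<longleftrightarrow>
     prob_space P \<and> sets P = sets (stream_space (count_space UNIV)) \<and>
     (\<forall>xs. measure P {\<omega> \<in> space P. stake (length xs) \<omega> = xs} = prefix_prob \<delta> \<sigma> q xs)"

definition eta_bounded ::
  "('q \<Rightarrow> 'a \<Rightarrow> 'q pmf) \<Rightarrow> real \<Rightarrow> ('q \<times> 'a) set \<Rightarrow> (('q,'a) fin_run \<Rightarrow> real) \<Rightarrow> bool" where
  "eta_bounded \<delta> \<eta> NZ v \<longleftrightarrow>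
     (\<forall>\<rho> \<alpha>. (last_state \<rho>, \<alpha>) \<notin> NZ \<longrightarrow> (\<forall>q'. v (fst \<rho>, snd \<rho> @ [(\<alpha>, q')]) = 0)) \<and>
     (\<forall>\<rho> \<alpha>. (last_state \<rho>, \<alpha>) \<in> NZ \<longrightarrow>
        (\<Sum>q'\<in>UNIV. pmf (\<delta> (last_state \<rho>) \<alpha>) q' * v (fst \<rho>, snd \<rho> @ [(\<alpha>, q')])) \<le> \<eta>)"

text \<open>Prefix q0 (a0,q1) ... (ai,q_{i+1}) of an infinite run.\<close>
definition run_prefix :: "('q \<times> 'a) stream \<Rightarrow> nat \<Rightarrow> ('q,'a) fin_run" where
  "run_prefix \<rho> i = (fst (\<rho> !! 0), map (\<lambda>j. (snd (\<rho> !! j), fst (\<rho> !! Suc j))) [0..<Suc i])"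

definition IndNZ :: "('q \<times> 'a) set \<Rightarrow> ('q \<times> 'a) stream \<Rightarrow> nat set" where
  "IndNZ NZ \<rho> = {i. \<rho> !! i \<in> NZ}"

definition IndNZn :: "('q \<times> 'a) set \<Rightarrow> nat \<Rightarrow> ('q \<times> 'a) stream \<Rightarrow> nat set" where
  "IndNZn NZ n \<rho> = {i \<in> IndNZ NZ \<rho>. card {j \<in> IndNZ NZ \<rho>. j < i} < n}"

definition s_v :: "('q \<times> 'a) set \<Rightarrow> (('q,'a) fin_run \<Rightarrow> real) \<Rightarrow> nat \<Rightarrow> ('q \<times> 'a) stream \<Rightarrow> real" where
  "s_v NZ v n \<rho> = (\<Sum>i\<in>IndNZn NZ n \<rho>. v (run_prefix \<rho> i))"

definition c_v :: "('q \<times> 'a) set \<Rightarrow> nat \<Rightarrow> ('q \<times> 'a) stream \<Rightarrow> nat" where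
  "c_v NZ n \<rho> = card (IndNZn NZ n \<rho>)"

definition f_v :: "('q \<times> 'a) set \<Rightarrow> (('q,'a) fin_run \<Rightarrow> real) \<Rightarrow> nat \<Rightarrow> real \<Rightarrow> ('q \<times> 'a) stream \<Rightarrow> real" where
  "f_v NZ v n M \<rho> = (if c_v NZ n \<rho> = n then s_v NZ v n \<rho> else - M)"

end

theory Submission
  imports Defs
begin

lemma hoeff_pmf:
  fixes D :: "'q::finite pmf" and X :: "'q \<Rightarrow> real"
  assumes ab: "\<forall>x. a \<le> X x \<and> X x \<le> b" and E: "(\<Sum>x\<in>UNIV. pmf D x * X x) \<le> \<eta>" and s: "s > 0"
  shows "(\<Sum>x\<in>UNIV. pmf D x * exp (s * (X x - \<eta>) - s\<^sup>2 * (b - a)\<^sup>2 / 8)) \<le> 1"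
proof -
  interpret I: interval_bounded_random_variable "measure_pmf D" X a b
    by unfold_locales (use ab in auto)
  define \<mu> where "\<mu> = measure_pmf.expectation D X"
  have mu: "\<mu> = (\<Sum>x\<in>UNIV. pmf D x * X x)"
    unfolding \<mu>_def by (subst integral_measure_pmf_real[where A=UNIV]) (auto simp: mult.commute)
  have h: "nn_integral (measure_pmf D) (\<lambda>x. exp (s * (X x - \<mu>))) \<le> ennreal (exp (s\<^sup>2 * (b - a)\<^sup>2 / 8))"
    unfolding \<mu>_def by (rule I.Hoeffdings_lemma_nn_integral[OF s])
  have int: "integrable (measure_pmf D) (\<lambda>x. exp (s * (X x - \<mu>)))"
    by (rule integrable_measure_pmf_finite) simp
  have "nn_integral (measure_pmf D) (\<lambda>x. exp (s * (X x - \<mu>))) = ennreal (measure_pmf.expectation D (\<lambda>x. exp (s * (X x - \<mu>))))"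
    by (rule nn_integral_eq_integral[OF int]) auto
  with h have h2: "measure_pmf.expectation D (\<lambda>x. exp (s * (X x - \<mu>))) \<le> exp (s\<^sup>2 * (b - a)\<^sup>2 / 8)"
    by (simp add: ennreal_le_iff)
  have h3: "measure_pmf.expectation D (\<lambda>x. exp (s * (X x - \<mu>))) = (\<Sum>x\<in>UNIV. pmf D x * exp (s * (X x - \<mu>)))"
    by (subst integral_measure_pmf_real[where A=UNIV]) (auto simp: mult.commute)
  define K where "K = s\<^sup>2 * (b - a)\<^sup>2 / 8"
  have eq: "exp (s * (X x - \<eta>) - K) = exp (s * (\<mu> - \<eta>)) * exp (-K) * exp (s * (X x - \<mu>))" for x
    by (simp only: exp_add[symmetric]) (simp add: algebra_simps)
  have "(\<Sum>x\<in>UNIV. pmf D x * exp (s * (X x - \<eta>) - K)) = exp (s * (\<mu> - \<eta>)) * exp (-K) * (\<Sum>x\<in>UNIV. pmf D x * exp (s * (X x - \<mu>)))"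
    unfolding eq sum_distrib_left by (intro sum.cong) auto
  also have "\<dots> \<le> 1 * exp (-K) * exp K"
    using h2 h3 mu E s unfolding K_def[symmetric]
    by (intro mult_mono) (auto simp: mult_le_0_iff intro!: sum_nonneg)
  also have "\<dots> = 1" by (simp add: exp_minus field_simps)
  finally show ?thesis unfolding K_def .
qed

lemma int_stake:
  fixes P :: "('q::finite \<times> 'a::finite) stream measure"
  assumes IM: "induced_measure \<delta> \<sigma> q P"
  shows "(\<integral>\<omega>. g (stake N \<omega>) \<partial>P) = (\<Sum>xs\<in>{xs. length xs = N}. g xs * prefix_prob \<delta> \<sigma> q xs)"
proof -
  have ps: "prob_space P" and sets: "sets P = sets (stream_space (count_space UNIV))"
    and mp: "\<And>xs. measure P {\<omega> \<in> space P. stake (length xs) \<omega> = xs} = prefix_prob \<delta> \<sigma> q xs"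
    using IM unfolding induced_measure_def by auto
  interpret prob_space P by (rule ps)
  have meas: "stake N \<in> measurable P (count_space UNIV)"
    using measurable_stake by (simp add: measurable_cong_sets[OF sets refl])
  have A: "{\<omega>\<in>space P. stake N \<omega> = xs} \<in> sets P" for xs
    using measurable_sets[OF meas, of "{xs}"] by (simp add: vimage_def Int_def conj_commute)
  define S where "S = {xs::('q \<times> 'a) list. length xs = N}"
  have fin: "finite S" unfolding S_def using finite_lists_length_eq[of "UNIV::('q\<times>'a) set" N] by simp
  have pw: "g (stake N \<omega>) = (\<Sum>xs\<in>S. g xs * indicator {\<omega>\<in>space P. stake N \<omega> = xs} \<omega>)" if "\<omega> \<in> space P" for \<omega>
  proof -
    have "(\<Sum>xs\<in>S. g xs * indicator {\<omega>\<in>space P. stake N \<omega> = xs} \<omega>) = (\<Sum>xs\<in>S. if stake N \<omega> = xs then g xs else 0)"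
      using that by (intro sum.cong) (auto simp: indicator_def)
    also have "\<dots> = g (stake N \<omega>)" using fin by (simp add: sum.delta S_def)
    finally show ?thesis by simp
  qed
  have "(\<integral>\<omega>. g (stake N \<omega>) \<partial>P) = (\<integral>\<omega>. (\<Sum>xs\<in>S. g xs * indicator {\<omega>\<in>space P. stake N \<omega> = xs} \<omega>) \<partial>P)"
    by (intro Bochner_Integration.integral_cong refl) (rule pw)
  also have "\<dots> = (\<Sum>xs\<in>S. (\<integral>\<omega>. g xs * indicator {\<omega>\<in>space P. stake N \<omega> = xs} \<omega> \<partial>P))"
    by (rule Bochner_Integration.integral_sum) (intro integrable_mult_right integrable_real_indicator A, simp add: less_top[symmetric])
  also have "\<dots> = (\<Sum>xs\<in>S. g xs * prefix_prob \<delta> \<sigma> q xs)"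
  proof (intro sum.cong refl)
    fix xs assume "xs \<in> S"
    hence "length xs = N" by (simp add: S_def)
    thus "(\<integral>\<omega>. g xs * indicator {\<omega>\<in>space P. stake N \<omega> = xs} \<omega> \<partial>P) = g xs * prefix_prob \<delta> \<sigma> q xs"
      using mp[of xs] A[of xs] by (simp add: integral_indicator less_top[symmetric])
  qed
  finally show ?thesis by (simp add: S_def)
qed

lemma hist_app: "j < length ys \<Longrightarrow> hist_of (ys @ [p]) j = hist_of ys j"
  unfolding hist_of_def by (auto simp: nth_append)

lemma hist_last: "length ys = Suc N \<Longrightarrow>
   hist_of (ys @ [(q', a')]) (Suc N) = (fst (hist_of ys N), snd (hist_of ys N) @ [(snd (ys ! N), q')])"
  unfolding hist_of_def by (auto simp: nth_append)

lemma last_state_hist: "length ys = Suc N \<Longrightarrow> last_state (hist_of ys N) = fst (ys ! N)"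
  unfolding hist_of_def last_state_def by (cases N) (auto simp: last_map)

lemma pp_app: assumes l: "length ys = Suc N" shows "
  prefix_prob \<delta> \<sigma> q (ys @ [p]) = prefix_prob \<delta> \<sigma> q ys * pmf (\<sigma> (hist_of (ys @ [p]) (Suc N))) (snd p)
     * pmf (\<delta> (fst (ys ! N)) (snd (ys ! N))) (fst p)"
proof -
  have ne: "ys \<noteq> []" using l by auto
  have 1: "(\<Prod>j<Suc (Suc N). pmf (\<sigma> (hist_of (ys @ [p]) j)) (snd ((ys @ [p]) ! j)))
      = (\<Prod>j<Suc N. pmf (\<sigma> (hist_of ys j)) (snd (ys ! j))) * pmf (\<sigma> (hist_of (ys @ [p]) (Suc N))) (snd p)"
    using l by (simp add: lessThan_Suc_eq_insert_0 [symmetric] nth_append hist_app)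
  have 2: "(\<Prod>j<Suc N. pmf (\<delta> (fst ((ys @ [p]) ! j)) (snd ((ys @ [p]) ! j))) (fst ((ys @ [p]) ! Suc j)))
     = (\<Prod>j<N. pmf (\<delta> (fst (ys ! j)) (snd (ys ! j))) (fst (ys ! Suc j))) * pmf (\<delta> (fst (ys ! N)) (snd (ys ! N))) (fst p)"
    using l by (simp add: nth_append)
  show ?thesis
    unfolding prefix_prob_def length_append_singleton l diff_Suc_1 1 2 using l ne by (simp add: nth_append)
qed

lemma sum_lists_Suc:
  fixes f :: "('b::finite) list \<Rightarrow> real"
  shows "(\<Sum>xs\<in>{xs. length xs = Suc N}. f xs) = (\<Sum>ys\<in>{ys. length ys = N}. \<Sum>p\<in>UNIV. f (ys @ [p]))"
proof -
  have fin: "finite {ys::'b list. length ys = N}" using finite_lists_length_eq[of "UNIV::'b set" N] by simp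
  have img: "{xs::'b list. length xs = Suc N} = (\<lambda>(ys, p). ys @ [p]) ` ({ys. length ys = N} \<times> UNIV)"
  proof (intro equalityI subsetI)
    fix xs :: "'b list" assume "xs \<in> {xs. length xs = Suc N}"
    hence "xs = butlast xs @ [last xs]" "length (butlast xs) = N" by (auto intro: append_butlast_last_id[symmetric])
    thus "xs \<in> (\<lambda>(ys, p). ys @ [p]) ` ({ys. length ys = N} \<times> UNIV)" by (auto intro!: image_eqI[of _ _ "(butlast xs, last xs)"])
  qed auto
  have inj: "inj_on (\<lambda>(ys, p). ys @ [p]) ({ys::'b list. length ys = N} \<times> UNIV)"
    by (auto simp: inj_on_def)
  show ?thesis
    unfolding img sum.reindex[OF inj] using fin by (simp add: sum.cartesian_product split_beta)
qed

definition tz :: "('q \<times> 'a) set \<Rightarrow> (('q,'a) fin_run \<Rightarrow> real) \<Rightarrow> nat \<Rightarrow> real \<Rightarrow> real \<Rightarrow> real \<Rightarrow> ('q \<times> 'a) list \<Rightarrow> nat \<Rightarrow> real" where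
  "tz NZ v n s \<eta> K xs i = (if xs ! i \<in> NZ \<and> card {j. j < i \<and> xs ! j \<in> NZ} < n
      then exp (s * (v (hist_of xs (Suc i)) - \<eta>) - K) else 1)"

definition Zf :: "('q \<times> 'a) set \<Rightarrow> (('q,'a) fin_run \<Rightarrow> real) \<Rightarrow> nat \<Rightarrow> real \<Rightarrow> real \<Rightarrow> real \<Rightarrow> nat \<Rightarrow> ('q \<times> 'a) list \<Rightarrow> real" where
  "Zf NZ v n s \<eta> K N xs = (\<Prod>i<N. tz NZ v n s \<eta> K xs i)"

lemma sum_UNIV_pair:
  fixes f :: "'x::finite \<times> 'y::finite \<Rightarrow> real"
  shows "(\<Sum>p\<in>UNIV. f p) = (\<Sum>x\<in>UNIV. \<Sum>y\<in>UNIV. f (x, y))"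
proof -
  have "(\<Sum>x\<in>UNIV. \<Sum>y\<in>UNIV. f (x, y)) = (\<Sum>(x, y)\<in>UNIV \<times> UNIV. f (x, y))"
    by (rule sum.cartesian_product)
  thus ?thesis by (simp add: case_prod_beta)
qed

lemma tz_nonneg: "tz NZ v n s \<eta> K xs i \<ge> 0" by (simp add: tz_def)
lemma Zf_nonneg: "Zf NZ v n s \<eta> K N xs \<ge> 0" by (simp add: Zf_def prod_nonneg tz_nonneg)

lemma pp_nonneg: "prefix_prob \<delta> \<sigma> q xs \<ge> 0"
  by (simp add: prefix_prob_def prod_nonneg)

lemma tz_app: "Suc i < length ys \<Longrightarrow> tz NZ v n s \<eta> K (ys @ [p]) i = tz NZ v n s \<eta> K ys i"
proof -
  assume l: "Suc i < length ys"
  have "{j. j < i \<and> (ys @ [p]) ! j \<in> NZ} = {j. j < i \<and> ys ! j \<in> NZ}" using l by (auto simp: nth_append)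
  thus ?thesis using l by (simp add: tz_def nth_append hist_app)
qed

lemma Zf_app: assumes l: "length ys = Suc N"
  shows "Zf NZ v n s \<eta> K (Suc N) (ys @ [p]) = Zf NZ v n s \<eta> K N ys * tz NZ v n s \<eta> K (ys @ [p]) N"
proof -
  have "(\<Prod>i<N. tz NZ v n s \<eta> K (ys @ [p]) i) = (\<Prod>i<N. tz NZ v n s \<eta> K ys i)"
    using l by (intro prod.cong refl tz_app) auto
  thus ?thesis by (simp add: Zf_def)
qed

lemma tz_last: assumes l: "length ys = Suc N"
  shows "tz NZ v n s \<eta> K (ys @ [(q', a')]) N = (if ys ! N \<in> NZ \<and> card {j. j < N \<and> ys ! j \<in> NZ} < n
      then exp (s * (v (fst (hist_of ys N), snd (hist_of ys N) @ [(snd (ys ! N), q')]) - \<eta>) - K) else 1)"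
proof -
  have "{j. j < N \<and> (ys @ [(q', a')]) ! j \<in> NZ} = {j. j < N \<and> ys ! j \<in> NZ}" using l by (auto simp: nth_append)
  thus ?thesis using l by (simp add: tz_def nth_append hist_last)
qed

lemma pp_sum1:
  fixes P :: "('q::finite \<times> 'a::finite) stream measure"
  assumes IM: "induced_measure \<delta> \<sigma> q P"
  shows "(\<Sum>xs\<in>{xs. length xs = N}. prefix_prob \<delta> \<sigma> q xs) = 1"
proof -
  have ps: "prob_space P" using IM unfolding induced_measure_def by auto
  have "(\<integral>\<omega>. (\<lambda>_. 1::real) (stake N \<omega>) \<partial>P) = 1" using prob_space.prob_space[OF ps] by simp
  thus ?thesis using int_stake[OF IM, of "\<lambda>_. 1" N] by simp
qed

lemma Z_le1:
  fixes P :: "('q::finite \<times> 'a::finite) stream measure" and \<delta> :: "'q \<Rightarrow> 'a \<Rightarrow> 'q pmf"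
  assumes IM: "induced_measure \<delta> \<sigma> q P" and EB: "eta_bounded \<delta> \<eta> NZ v"
    and ab: "\<forall>h. a \<le> v h \<and> v h \<le> b" and s: "s > 0"
  shows "(\<Sum>xs\<in>{xs. length xs = Suc N}. prefix_prob \<delta> \<sigma> q xs * Zf NZ v n s \<eta> (s\<^sup>2 * (b - a)\<^sup>2 / 8) N xs) \<le> 1"
proof (induction N)
  case 0
  show ?case using pp_sum1[OF IM, of 1] by (simp add: Zf_def)
next
  case (Suc N)
  define K where "K = s\<^sup>2 * (b - a)\<^sup>2 / 8"
  have inner: "(\<Sum>p\<in>UNIV. prefix_prob \<delta> \<sigma> q (ys @ [p]) * Zf NZ v n s \<eta> K (Suc N) (ys @ [p]))
      \<le> prefix_prob \<delta> \<sigma> q ys * Zf NZ v n s \<eta> K N ys" if l: "length ys = Suc N" for ys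
  proof -
    define h where "h = hist_of ys N"
    define \<alpha> where "\<alpha> = snd (ys ! N)"
    define D where "D = \<delta> (fst (ys ! N)) \<alpha>"
    define T where "T = (\<lambda>q'. if ys ! N \<in> NZ \<and> card {j. j < N \<and> ys ! j \<in> NZ} < n
      then exp (s * (v (fst h, snd h @ [(\<alpha>, q')]) - \<eta>) - K) else 1)"
    define H where "H = (\<lambda>q'. (fst h, snd h @ [(\<alpha>, q')]))"
    have eq1: "prefix_prob \<delta> \<sigma> q (ys @ [(q', a')]) * Zf NZ v n s \<eta> K (Suc N) (ys @ [(q', a')])
       = prefix_prob \<delta> \<sigma> q ys * Zf NZ v n s \<eta> K N ys * (pmf D q' * T q' * pmf (\<sigma> (H q')) a')" for q' a'
      unfolding pp_app[OF l] Zf_app[OF l] tz_last[OF l] hist_last[OF l]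
      by (simp add: T_def H_def D_def h_def \<alpha>_def)
    have le: "(\<Sum>q'\<in>UNIV. pmf D q' * T q') \<le> 1"
      proof (cases "ys ! N \<in> NZ \<and> card {j. j < N \<and> ys ! j \<in> NZ} < n")
        case True
        have ls: "last_state h = fst (ys ! N)" unfolding h_def by (rule last_state_hist[OF l])
        have mem: "(last_state h, \<alpha>) \<in> NZ" using True ls by (simp add: \<alpha>_def)
        have E: "(\<Sum>q'\<in>UNIV. pmf D q' * v (fst h, snd h @ [(\<alpha>, q')])) \<le> \<eta>"
        proof -
          have E0: "\<forall>\<rho> \<alpha>. (last_state \<rho>, \<alpha>) \<in> NZ \<longrightarrow>
             (\<Sum>q'\<in>UNIV. pmf (\<delta> (last_state \<rho>) \<alpha>) q' * v (fst \<rho>, snd \<rho> @ [(\<alpha>, q')])) \<le> \<eta>"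
            using EB unfolding eta_bounded_def by blast
          have "(\<Sum>q'\<in>UNIV. pmf (\<delta> (last_state h) \<alpha>) q' * v (fst h, snd h @ [(\<alpha>, q')])) \<le> \<eta>"
            using E0 mem by blast
          thus ?thesis by (simp add: D_def ls)
        qed
        have "(\<Sum>q'\<in>UNIV. pmf D q' * exp (s * (v (fst h, snd h @ [(\<alpha>, q')]) - \<eta>) - s\<^sup>2 * (b - a)\<^sup>2 / 8)) \<le> 1"
          by (rule hoeff_pmf[OF _ E s]) (use ab in auto)
        thus ?thesis using True by (simp add: T_def K_def)
      next
        case False
        hence "(\<Sum>q'\<in>UNIV. pmf D q' * T q') = (\<Sum>q'\<in>UNIV. pmf D q')" unfolding T_def by (intro sum.cong refl) auto
        also have "\<dots> = 1" by (rule sum_pmf_eq_1) simp_all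
        finally show ?thesis by simp
      qed
    have "(\<Sum>p\<in>UNIV. prefix_prob \<delta> \<sigma> q (ys @ [p]) * Zf NZ v n s \<eta> K (Suc N) (ys @ [p]))
        = (\<Sum>q'\<in>UNIV. \<Sum>a'\<in>UNIV. prefix_prob \<delta> \<sigma> q (ys @ [(q', a')]) * Zf NZ v n s \<eta> K (Suc N) (ys @ [(q', a')]))"
      by (rule sum_UNIV_pair)
    also have "\<dots> = prefix_prob \<delta> \<sigma> q ys * Zf NZ v n s \<eta> K N ys * (\<Sum>q'\<in>UNIV. pmf D q' * T q' * (\<Sum>a'\<in>UNIV. pmf (\<sigma> (H q')) a'))"
      unfolding eq1 by (simp add: sum_distrib_left)
    also have "\<dots> = prefix_prob \<delta> \<sigma> q ys * Zf NZ v n s \<eta> K N ys * (\<Sum>q'\<in>UNIV. pmf D q' * T q')"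
      by (simp add: sum_pmf_eq_1)
    also have "\<dots> \<le> prefix_prob \<delta> \<sigma> q ys * Zf NZ v n s \<eta> K N ys * 1"
      by (rule mult_left_mono[OF le]) (simp add: pp_nonneg Zf_nonneg)
    finally show ?thesis by simp
  qed
  have "(\<Sum>xs\<in>{xs. length xs = Suc (Suc N)}. prefix_prob \<delta> \<sigma> q xs * Zf NZ v n s \<eta> K (Suc N) xs)
     = (\<Sum>ys\<in>{ys. length ys = Suc N}. \<Sum>p\<in>UNIV. prefix_prob \<delta> \<sigma> q (ys @ [p]) * Zf NZ v n s \<eta> K (Suc N) (ys @ [p]))"
    by (rule sum_lists_Suc)
  also have "\<dots> \<le> (\<Sum>ys\<in>{ys. length ys = Suc N}. prefix_prob \<delta> \<sigma> q ys * Zf NZ v n s \<eta> K N ys)"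
    by (intro sum_mono inner) simp
  also have "\<dots> \<le> 1" using Suc.IH unfolding K_def .
  finally show ?case unfolding K_def .
qed

definition INs :: "('q \<times> 'a) set \<Rightarrow> nat \<Rightarrow> nat \<Rightarrow> ('q \<times> 'a) list \<Rightarrow> nat set" where
  "INs NZ n T xs = {i. i < T \<and> xs ! i \<in> NZ \<and> card {j. j < i \<and> xs ! j \<in> NZ} < n}"

definition gT :: "('q \<times> 'a) set \<Rightarrow> (('q,'a) fin_run \<Rightarrow> real) \<Rightarrow> nat \<Rightarrow> real \<Rightarrow> real \<Rightarrow> real \<Rightarrow> nat \<Rightarrow> ('q \<times> 'a) list \<Rightarrow> real" where
  "gT NZ v n M s \<eta> T xs = (if card (INs NZ n T xs) = n
      then exp (s * ((\<Sum>i\<in>INs NZ n T xs. v (hist_of xs (Suc i))) - real n * \<eta>))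
      else exp (s * (- M - real n * \<eta>)))"

lemma INs_finite: "finite (INs NZ n T xs)"
  by (rule finite_subset[of _ "{..<T}"]) (auto simp: INs_def)

lemma Zf_eq: "Zf NZ v n s \<eta> K T xs = exp (\<Sum>i\<in>INs NZ n T xs. s * (v (hist_of xs (Suc i)) - \<eta>) - K)"
proof -
  have "Zf NZ v n s \<eta> K T xs = (\<Prod>i\<in>{i\<in>{..<T}. xs ! i \<in> NZ \<and> card {j. j < i \<and> xs ! j \<in> NZ} < n}.
      exp (s * (v (hist_of xs (Suc i)) - \<eta>) - K))"
    unfolding Zf_def tz_def by (rule prod.inter_filter[symmetric]) simp
  also have "{i\<in>{..<T}. xs ! i \<in> NZ \<and> card {j. j < i \<and> xs ! j \<in> NZ} < n} = INs NZ n T xs"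
    by (auto simp: INs_def)
  finally show ?thesis by (simp add: exp_sum INs_finite)
qed

lemma g_le:
  assumes K: "K \<ge> 0"
  shows "gT NZ v n M s \<eta> T xs \<le> exp (real n * K) * Zf NZ v n s \<eta> K T xs + (if n = 0 then 0 else exp (s * (- M - real n * \<eta>)))"
proof (cases "card (INs NZ n T xs) = n")
  case True
  have "(\<Sum>i\<in>INs NZ n T xs. s * (v (hist_of xs (Suc i)) - \<eta>) - K)
      = s * (\<Sum>i\<in>INs NZ n T xs. v (hist_of xs (Suc i))) - real n * (s * \<eta>) - real n * K"
    using True by (simp add: sum_subtractf sum_distrib_left algebra_simps)
  hence "exp (real n * K) * Zf NZ v n s \<eta> K T xs = exp (s * ((\<Sum>i\<in>INs NZ n T xs. v (hist_of xs (Suc i))) - real n * \<eta>))"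
    unfolding Zf_eq by (simp add: exp_add[symmetric] algebra_simps)
  thus ?thesis using True by (simp add: gT_def)
next
  case False
  have "n \<noteq> 0"
  proof
    assume "n = 0"
    hence "INs NZ n T xs = {}" by (simp add: INs_def)
    thus False using False \<open>n = 0\<close> by simp
  qed
  thus ?thesis using False by (simp add: gT_def Zf_nonneg)
qed

lemma g_bound:
  assumes ab: "\<forall>h. a \<le> v h \<and> v h \<le> b" and s: "s > 0"
  shows "\<bar>gT NZ v n M s \<eta> T xs\<bar> \<le> exp (s * (real n * b - real n * \<eta>)) + exp (s * (- M - real n * \<eta>))"
proof (cases "card (INs NZ n T xs) = n")
  case True
  have vb: "\<And>h. v h \<le> b" using ab by blast
  have "(\<Sum>i\<in>INs NZ n T xs. v (hist_of xs (Suc i))) \<le> of_nat (card (INs NZ n T xs)) * b"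
    by (rule sum_bounded_above) (use vb in blast)
  hence "exp (s * ((\<Sum>i\<in>INs NZ n T xs. v (hist_of xs (Suc i))) - real n * \<eta>)) \<le> exp (s * (real n * b - real n * \<eta>))"
    using True s by (simp add: mult_left_mono)
  thus ?thesis using True by (simp add: gT_def add_increasing2)
next
  case False
  thus ?thesis by (simp add: gT_def add_increasing)
qed

lemma g_sum:
  fixes P :: "('q::finite \<times> 'a::finite) stream measure" and \<delta> :: "'q \<Rightarrow> 'a \<Rightarrow> 'q pmf"
  assumes IM: "induced_measure \<delta> \<sigma> q P" and EB: "eta_bounded \<delta> \<eta> NZ v"
    and ab: "\<forall>h. a \<le> v h \<and> v h \<le> b" and s: "s > 0"
  shows "(\<Sum>xs\<in>{xs. length xs = Suc T}. gT NZ v n M s \<eta> T xs * prefix_prob \<delta> \<sigma> q xs)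
     \<le> exp (real n * (s\<^sup>2 * (b - a)\<^sup>2 / 8)) + (if n = 0 then 0 else exp (s * (- M - real n * \<eta>)))"
proof -
  define K where "K = s\<^sup>2 * (b - a)\<^sup>2 / 8"
  define c where "c = (if n = 0 then 0 else exp (s * (- M - real n * \<eta>)))"
  have K0: "K \<ge> 0" by (simp add: K_def)
  have "(\<Sum>xs\<in>{xs. length xs = Suc T}. gT NZ v n M s \<eta> T xs * prefix_prob \<delta> \<sigma> q xs)
     \<le> (\<Sum>xs\<in>{xs. length xs = Suc T}. (exp (real n * K) * Zf NZ v n s \<eta> K T xs + c) * prefix_prob \<delta> \<sigma> q xs)"
    by (intro sum_mono mult_right_mono pp_nonneg) (simp add: c_def g_le[OF K0])
  also have "\<dots> = exp (real n * K) * (\<Sum>xs\<in>{xs. length xs = Suc T}. prefix_prob \<delta> \<sigma> q xs * Zf NZ v n s \<eta> K T xs)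
       + c * (\<Sum>xs\<in>{xs. length xs = Suc T}. prefix_prob \<delta> \<sigma> q xs)"
    by (simp add: sum.distrib sum_distrib_left algebra_simps)
  also have "\<dots> \<le> exp (real n * K) * 1 + c * 1"
    using Z_le1[OF IM EB ab s, where N=T and n=n] pp_sum1[OF IM, of "Suc T"] unfolding K_def[symmetric]
    by simp
  finally show ?thesis by (simp add: K_def c_def)
qed

lemma IndNZn_finite: "finite (IndNZn NZ n \<rho>)"
proof -
  define r where "r = (\<lambda>i. card {j \<in> IndNZ NZ \<rho>. j < i})"
  have mono: "r i < r i'" if "i < i'" "i \<in> IndNZ NZ \<rho>" for i i'
  proof -
    have "{j \<in> IndNZ NZ \<rho>. j < i} \<subset> {j \<in> IndNZ NZ \<rho>. j < i'}" using that by auto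
    moreover have "finite {j \<in> IndNZ NZ \<rho>. j < i'}" by (rule finite_subset[of _ "{..<i'}"]) auto
    ultimately show ?thesis unfolding r_def by (rule psubset_card_mono[rotated])
  qed
  have inj: "inj_on r (IndNZn NZ n \<rho>)"
  proof (rule inj_onI)
    fix i i' assume i: "i \<in> IndNZn NZ n \<rho>" and i': "i' \<in> IndNZn NZ n \<rho>" and e: "r i = r i'"
    show "i = i'"
    proof (rule ccontr)
      assume "i \<noteq> i'"
      hence "i < i' \<or> i' < i" by auto
      thus False using mono[of i i'] mono[of i' i] i i' e by (auto simp: IndNZn_def)
    qed
  qed
  have "r ` IndNZn NZ n \<rho> \<subseteq> {..<n}" by (auto simp: IndNZn_def r_def)
  hence "finite (r ` IndNZn NZ n \<rho>)" by (rule finite_subset) simp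
  thus ?thesis using inj by (rule finite_imageD)
qed

lemma INs_stake: "INs NZ n T (stake (Suc T) \<rho>) = IndNZn NZ n \<rho> \<inter> {..<T}"
proof -
  have c: "{j. j < i \<and> stake (Suc T) \<rho> ! j \<in> NZ} = {j \<in> IndNZ NZ \<rho>. j < i}" if "i < T" for i
    using that by (auto simp: IndNZ_def stake_nth simp del: stake.simps)
  show ?thesis
    by (auto simp: INs_def IndNZn_def c stake_nth IndNZ_def simp del: stake.simps)
qed

lemma hist_stake: "i < T \<Longrightarrow> hist_of (stake (Suc T) \<rho>) (Suc i) = run_prefix \<rho> i"
  unfolding hist_of_def run_prefix_def by (auto simp: stake_nth simp del: stake.simps)

lemma g_lim: "(\<lambda>T. gT NZ v n M s \<eta> T (stake (Suc T) \<rho>)) \<longlonglongrightarrow> exp (s * (f_v NZ v n M \<rho> - real n * \<eta>))"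
proof (rule tendsto_eventually)
  obtain k where k: "IndNZn NZ n \<rho> \<subseteq> {..<k}" using finite_nat_bounded[OF IndNZn_finite] by blast
  show "\<forall>\<^sub>F T in sequentially. gT NZ v n M s \<eta> T (stake (Suc T) \<rho>) = exp (s * (f_v NZ v n M \<rho> - real n * \<eta>))"
    unfolding eventually_sequentially
  proof (intro exI allI impI)
    fix T assume T: "k \<le> T"
    have I: "INs NZ n T (stake (Suc T) \<rho>) = IndNZn NZ n \<rho>" using k T by (auto simp: INs_stake simp del: stake.simps)
    have S: "(\<Sum>i\<in>IndNZn NZ n \<rho>. v (hist_of (stake (Suc T) \<rho>) (Suc i))) = s_v NZ v n \<rho>"
      unfolding s_v_def using k T by (intro sum.cong refl) (auto simp: hist_stake simp del: stake.simps)
    show "gT NZ v n M s \<eta> T (stake (Suc T) \<rho>) = exp (s * (f_v NZ v n M \<rho> - real n * \<eta>))"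
      unfolding gT_def I S f_v_def c_v_def by simp
  qed
qed

theorem mainTheorem13:
  fixes \<delta> :: "'q::finite \<Rightarrow> 'a::finite \<Rightarrow> 'q pmf"
    and q :: 'q and a b \<eta> :: real
    and NZ :: "('q \<times> 'a) set" and v :: "('q,'a) fin_run \<Rightarrow> real"
  assumes "a < 0" "0 < b" "a \<le> \<eta>" "\<eta> \<le> 0"
    and "\<forall>h. a \<le> v h \<and> v h \<le> b"
    and "eta_bounded \<delta> \<eta> NZ v"
  shows "\<forall>(s::real) (n::nat) (M::real) (\<sigma>::('q,'a) fin_run \<Rightarrow> 'a pmf) P.
           s > 0 \<longrightarrow> M \<ge> 0 \<longrightarrow> induced_measure \<delta> \<sigma> q P \<longrightarrow>
           (\<integral>\<rho>. exp (s * (f_v NZ v n M \<rho> - real n * \<eta>)) \<partial>P)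
             \<le> exp (real n * (s\<^sup>2 * (b - a)\<^sup>2 / 8))
                + real n * exp (s * (- M + real n * max \<bar>a\<bar> \<bar>b\<bar>) + real n * (s\<^sup>2 * (b - a)\<^sup>2 / 8))"
proof (intro allI impI)
  fix s :: real and n :: nat and M :: real and \<sigma> :: "('q,'a) fin_run \<Rightarrow> 'a pmf" and P
  assume s: "s > 0" and M: "M \<ge> 0" and IM: "induced_measure \<delta> \<sigma> q P"
  have ab: "\<forall>h. a \<le> v h \<and> v h \<le> b" and EB: "eta_bounded \<delta> \<eta> NZ v" using assms by auto
  define K where "K = s\<^sup>2 * (b - a)\<^sup>2 / 8"
  define c where "c = (if n = 0 then 0 else exp (s * (- M - real n * \<eta>)))"
  define C where "C = exp (s * (real n * b - real n * \<eta>)) + exp (s * (- M - real n * \<eta>))"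
  define Fn where "Fn = (\<lambda>\<rho>. exp (s * (f_v NZ v n M \<rho> - real n * \<eta>)))"
  define Gs where "Gs = (\<lambda>T \<rho>. gT NZ v n M s \<eta> T (stake (Suc T) \<rho>))"
  have ps: "prob_space P" and sets: "sets P = sets (stream_space (count_space UNIV))"
    using IM unfolding induced_measure_def by auto
  interpret prob_space P by (rule ps)
  have meas: "stake N \<in> measurable P (count_space UNIV)" for N
    using measurable_stake by (simp add: measurable_cong_sets[OF sets refl])
  have Gm: "Gs T \<in> borel_measurable P" for T
    unfolding Gs_def by (rule measurable_compose[OF meas]) simp
  have lim: "(\<lambda>T. Gs T \<rho>) \<longlonglongrightarrow> Fn \<rho>" for \<rho>
    unfolding Gs_def Fn_def by (rule g_lim)
  have Fm: "Fn \<in> borel_measurable P"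
    by (rule borel_measurable_LIMSEQ_real[OF lim Gm])
  have conv: "(\<lambda>T. integral\<^sup>L P (Gs T)) \<longlonglongrightarrow> integral\<^sup>L P Fn"
  proof (rule integral_dominated_convergence[where w = "\<lambda>_. C"])
    show "integrable P (\<lambda>_. C)" by simp
    show "AE x in P. (\<lambda>T. Gs T x) \<longlonglongrightarrow> Fn x" using lim by simp
    show "AE x in P. norm (Gs T x) \<le> C" for T
      unfolding Gs_def C_def using g_bound[OF ab s] by simp
  qed (use Fm Gm in auto)
  have bnd: "integral\<^sup>L P (Gs T) \<le> exp (real n * K) + c" for T
  proof -
    have "integral\<^sup>L P (Gs T) = (\<Sum>xs\<in>{xs. length xs = Suc T}. gT NZ v n M s \<eta> T xs * prefix_prob \<delta> \<sigma> q xs)"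
      unfolding Gs_def by (rule int_stake[OF IM])
    also have "\<dots> \<le> exp (real n * K) + c"
      unfolding K_def c_def by (rule g_sum[OF IM EB ab s])
    finally show ?thesis .
  qed
  have main: "integral\<^sup>L P Fn \<le> exp (real n * K) + c"
    by (rule LIMSEQ_le_const2[OF conv]) (use bnd in auto)
  have cle: "c \<le> real n * exp (s * (- M + real n * max \<bar>a\<bar> \<bar>b\<bar>) + real n * K)"
  proof (cases "n = 0")
    case False
    have "- \<eta> \<le> max \<bar>a\<bar> \<bar>b\<bar>" using assms(1,3) by auto
    hence "real n * (- \<eta>) \<le> real n * max \<bar>a\<bar> \<bar>b\<bar>" by (intro mult_left_mono) auto
    hence "- real n * \<eta> \<le> real n * max \<bar>a\<bar> \<bar>b\<bar>" by simp
    hence "s * (- M - real n * \<eta>) \<le> s * (- M + real n * max \<bar>a\<bar> \<bar>b\<bar>) + real n * K"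
    proof -
      have "s * (- M - real n * \<eta>) \<le> s * (- M + real n * max \<bar>a\<bar> \<bar>b\<bar>)"
        using s \<open>- real n * \<eta> \<le> real n * max \<bar>a\<bar> \<bar>b\<bar>\<close> by (intro mult_left_mono) auto
      moreover have "real n * K \<ge> 0" by (simp add: K_def)
      ultimately show ?thesis by linarith
    qed
    hence "exp (s * (- M - real n * \<eta>)) \<le> exp (s * (- M + real n * max \<bar>a\<bar> \<bar>b\<bar>) + real n * K)"
      by simp
    also have "\<dots> \<le> real n * exp (s * (- M + real n * max \<bar>a\<bar> \<bar>b\<bar>) + real n * K)"
      using False by simp
    finally show ?thesis using False by (simp add: c_def)
  qed (simp add: c_def)
  show "(\<integral>\<rho>. exp (s * (f_v NZ v n M \<rho> - real n * \<eta>)) \<partial>P)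
             \<le> exp (real n * (s\<^sup>2 * (b - a)\<^sup>2 / 8))
                + real n * exp (s * (- M + real n * max \<bar>a\<bar> \<bar>b\<bar>) + real n * (s\<^sup>2 * (b - a)\<^sup>2 / 8))"
    using main cle unfolding Fn_def K_def by simp
qed

end
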